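(* Let $\mathbb{G}$ be a graph as described in the context, with root node $z_0$, let $\lambda$ be a nonnegative Borel measure on $\mathbb{G}$, and let $1 \le p < \infty$. Set $$c_1 := \left[ \frac{\min(1, \lambda(\mathbb{G})^{p-1})}{1 + \lambda(\mathbb{G})^{p}} \right]^{1/p}, \qquad c_2 := \left[\max(1, \lambda(\mathbb{G})^{p-1})\right]^{1/p}.$$ Then for every function $f \in W^{1,p}_0(\mathbb{G}, \lambda)$, $$c_1 \|f'\|_{L^p_{\hat w}} \le \|f\|_{W^{1,p}} \le c_2 \|f'\|_{L^p_{\hat w}}.$$
   Context: $\mathbb{G}=(V,E)$ is a connected, undirected graph with $V \subset \mathbb{R}^n$, where each edge $e\in E$ is the line segment in $\mathbb{R}^n$ joining its two endpoints and has positive length $w_e$. $\mathbb{G}$ is identified with the set of all nodes together with all points of all edges, with the Euclidean-induced topology, and carries the graph metric $d_{\mathbb{G}}(x,y)$ = length of a shortest path from $x$ to $y$ in $\mathbb{G}$. There is a fixed root node $z_0\in V$ such that for every $x\in\mathbb{G}$ the shortest path $[z_0,x]$ from $z_0$ to $x$ is unique. For $x\in\mathbb{G}$ let $\Lambda(x) := \{y\in\mathbb{G} : x\in[z_0,y]\}$. For a nonnegative Borel measure $\lambda$ on $\mathbb{G}$ and $1\le p\le\infty$, a continuous $f:\mathbb{G}\to\mathbb{R}$ belongs to the Sobolev space $W^{1,p}(\mathbb{G},\lambda)$ if there is $h\in L^p(\mathbb{G},\lambda)$ with $f(x)-f(z_0) = \int_{[z_0,x]} h(y)\,\lambda(dy)$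 for all $x\in\mathbb{G}$; this $h$ is unique in $L^p(\mathbb{G},\lambda)$ and is denoted $f'$ (the graph derivative). $W^{1,p}_0(\mathbb{G},\lambda)$ is the subspace of $f\in W^{1,p}(\mathbb{G},\lambda)$ with $f(z_0)=0$. The Sobolev norm is $\|f\|_{W^{1,p}} := (\|f\|_{L^p}^p + \|f'\|_{L^p}^p)^{1/p}$, where $\|\cdot\|_{L^p}$ is the $L^p(\mathbb{G},\lambda)$ norm. The weight function is $\hat w(x) := 1 + \lambda(\Lambda(x))$ for $x\in\mathbb{G}$, and the weighted norm is $\|g\|_{L^p_{\hat w}} := \left(\int_{\mathbb{G}} \hat w(x)|g(x)|^p\,\lambda(dx)\right)^{1/p}$. *)

theory Defs
  imports "HOL-Analysis.Analysis" "HOL-Probability.Probability"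
begin

text \<open>A graph is given by a set of nodes V and a set E of edges, each edge being a
  two-element set {u,v} of nodes; the edge is the straight line segment joining u and v,
  and its length is the Euclidean length dist u v.\<close>

definition graph_points :: "'a::euclidean_space set \<Rightarrow> 'a set set \<Rightarrow> 'a set" where
  "graph_points V E = V \<union> \<Union>{closed_segment u v | u v. {u, v} \<in> E}"

definition wf_graph :: "'a::euclidean_space set \<Rightarrow> 'a set set \<Rightarrow> bool" where
  "wf_graph V E \<longleftrightarrow>
     finite V \<and> V \<noteq> {} \<and>
     (\<forall>e\<in>E. \<exists>u v. e = {u, v} \<and> u \<in> V \<and> v \<in> V \<and> u \<noteq> v) \<and>
     \<comment> \<open>no node lies in the interior of an edge\<close>
     (\<forall>u v. {u, v} \<in> E \<longrightarrow> V \<inter> closed_segment u v \<subseteq> {u, v}) \<and>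
     \<comment> \<open>distinct edges meet only in common endpoints\<close>
     (\<forall>u v u' v'. {u, v} \<in> E \<longrightarrow> {u', v'} \<in> E \<longrightarrow> {u, v} \<noteq> {u', v'} \<longrightarrow>
         closed_segment u v \<inter> closed_segment u' v' \<subseteq> {u, v} \<inter> {u', v'}) \<and>
     \<comment> \<open>connectedness\<close>
     (\<forall>u\<in>V. \<forall>v\<in>V. (u, v) \<in> {(a, b). {a, b} \<in> E}\<^sup>*)"

definition gpath :: "'a::euclidean_space set set \<Rightarrow> 'a \<Rightarrow> 'a list \<Rightarrow> 'a \<Rightarrow> bool" where
  "gpath E z0 vs x \<longleftrightarrow>
     vs \<noteq> [] \<and> hd vs = z0 \<and> distinct vs \<and>
     (\<forall>i. Suc i < length vs \<longrightarrow> {vs ! i, vs ! Suc i} \<in> E) \<and>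
     (x = last vs \<or> (\<exists>w. {last vs, w} \<in> E \<and> x \<in> closed_segment (last vs) w))"

definition gpath_set :: "'a::euclidean_space list \<Rightarrow> 'a \<Rightarrow> 'a set" where
  "gpath_set vs x =
     \<Union>{closed_segment (vs ! i) (vs ! Suc i) | i. Suc i < length vs} \<union> closed_segment (last vs) x"

definition gpath_len :: "'a::euclidean_space list \<Rightarrow> 'a \<Rightarrow> real" where
  "gpath_len vs x = (\<Sum>i<length vs - 1. dist (vs ! i) (vs ! Suc i)) + dist (last vs) x"

definition is_shortest :: "'a::euclidean_space set set \<Rightarrow> 'a \<Rightarrow> 'a list \<Rightarrow> 'a \<Rightarrow> bool" where
  "is_shortest E z0 vs x \<longleftrightarrow>
     gpath E z0 vs x \<and> (\<forall>ws. gpath E z0 ws x \<longrightarrow> gpath_len vs x \<le> gpath_len ws x)"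

definition unique_shortest_paths :: "'a::euclidean_space set \<Rightarrow> 'a set set \<Rightarrow> 'a \<Rightarrow> bool" where
  "unique_shortest_paths V E z0 \<longleftrightarrow>
     (\<forall>x\<in>graph_points V E. \<forall>vs ws. is_shortest E z0 vs x \<longrightarrow> is_shortest E z0 ws x \<longrightarrow>
         gpath_set vs x = gpath_set ws x)"

definition spath :: "'a::euclidean_space set set \<Rightarrow> 'a \<Rightarrow> 'a \<Rightarrow> 'a set" where
  "spath E z0 x = (THE S. \<exists>vs. is_shortest E z0 vs x \<and> S = gpath_set vs x)"

definition Lambda_set :: "'a::euclidean_space set \<Rightarrow> 'a set set \<Rightarrow> 'a \<Rightarrow> 'a \<Rightarrow> 'a set" where
  "Lambda_set V E z0 x = {y \<in> graph_points V E. x \<in> spath E z0 y}"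

definition W1p0_deriv ::
  "'a::euclidean_space set \<Rightarrow> 'a set set \<Rightarrow> 'a \<Rightarrow> 'a measure \<Rightarrow> real \<Rightarrow> ('a \<Rightarrow> real) \<Rightarrow> ('a \<Rightarrow> real) \<Rightarrow> bool"
where
  "W1p0_deriv V E z0 M p f h \<longleftrightarrow>
     continuous_on (graph_points V E) f \<and>
     h \<in> borel_measurable M \<and> integrable M (\<lambda>x. \<bar>h x\<bar> powr p) \<and>
     (\<forall>x\<in>graph_points V E. f x - f z0 = (\<integral>y\<in>spath E z0 x. h y \<partial>M)) \<and>
     f z0 = 0"

definition Lp_norm :: "'a measure \<Rightarrow> real \<Rightarrow> ('a \<Rightarrow> real) \<Rightarrow> real" where
  "Lp_norm M p g = (\<integral>x. \<bar>g x\<bar> powr p \<partial>M) powr (1 / p)"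

definition W1p_norm :: "'a measure \<Rightarrow> real \<Rightarrow> ('a \<Rightarrow> real) \<Rightarrow> ('a \<Rightarrow> real) \<Rightarrow> real" where
  "W1p_norm M p f f' = ((\<integral>x. \<bar>f x\<bar> powr p \<partial>M) + (\<integral>x. \<bar>f' x\<bar> powr p \<partial>M)) powr (1 / p)"

definition what :: "'a::euclidean_space set \<Rightarrow> 'a set set \<Rightarrow> 'a \<Rightarrow> 'a measure \<Rightarrow> 'a \<Rightarrow> real" where
  "what V E z0 M x = 1 + measure M (Lambda_set V E z0 x)"

definition weighted_Lp_norm ::
  "'a::euclidean_space set \<Rightarrow> 'a set set \<Rightarrow> 'a \<Rightarrow> 'a measure \<Rightarrow> real \<Rightarrow> ('a \<Rightarrow> real) \<Rightarrow> real" where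
  "weighted_Lp_norm V E z0 M p g = (\<integral>x. what V E z0 M x * \<bar>g x\<bar> powr p \<partial>M) powr (1 / p)"

text \<open>Real power with the convention t^0 = 1 (also for t = 0), as used in the paper's
  constants; Isabelle's powr has 0 powr 0 = 0.\<close>

definition rpow :: "real \<Rightarrow> real \<Rightarrow> real" where
  "rpow t a = (if a = 0 then 1 else t powr a)"

end

theory Submission
  imports Defs
begin


lemma edge_V:
  assumes "wf_graph V E" "{a, b} \<in> E" shows "a \<in> V" "b \<in> V"
proof -
  have "\<forall>e\<in>E. \<exists>u v. e = {u, v} \<and> u \<in> V \<and> v \<in> V \<and> u \<noteq> v"
    using assms(1) unfolding wf_graph_def by (elim conjE)
  then obtain u v where "{a,b} = {u,v}" "u \<in> V" "v \<in> V"
    using assms(2) by metis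
  then show "a \<in> V" "b \<in> V" by (auto simp: doubleton_eq_iff)
qed

lemma wf_finite: "wf_graph V E \<Longrightarrow> finite V"
  unfolding wf_graph_def by (elim conjE)

lemma wf_conn0: "wf_graph V E \<Longrightarrow> \<forall>u\<in>V. \<forall>v\<in>V. (u, v) \<in> {(a, b). {a, b} \<in> E}\<^sup>*"
  unfolding wf_graph_def by (elim conjE) assumption

lemma wf_conn: "wf_graph V E \<Longrightarrow> u \<in> V \<Longrightarrow> v \<in> V \<Longrightarrow> (u, v) \<in> {(a, b). {a, b} \<in> E}\<^sup>*"
  using wf_conn0 by blast

lemma gpath_setV:
  assumes "wf_graph V E" "z0 \<in> V" "gpath E z0 ws x" shows "set ws \<subseteq> V"
proof
  fix a assume "a \<in> set ws"
  then obtain i where i: "i < length ws" "ws ! i = a" by (auto simp: in_set_conv_nth)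
  show "a \<in> V"
  proof (cases i)
    case 0 then show ?thesis using i assms(2,3) by (auto simp: gpath_def hd_conv_nth)
  next
    case (Suc j)
    then have "{ws ! j, ws ! Suc j} \<in> E" using i assms(3) by (auto simp: gpath_def)
    then show ?thesis using edge_V[OF assms(1)] i Suc by auto
  qed
qed

definition spth :: "'a set set \<Rightarrow> 'a \<Rightarrow> 'a list \<Rightarrow> bool" where
  "spth E z0 vs \<longleftrightarrow> vs \<noteq> [] \<and> hd vs = z0 \<and> distinct vs \<and>
     (\<forall>i. Suc i < length vs \<longrightarrow> {vs ! i, vs ! Suc i} \<in> E)"

lemma reach_path:
  assumes "(z0, v) \<in> {(a, b). {a, b} \<in> E}\<^sup>*"
  shows "\<exists>vs. spth E z0 vs \<and> last vs = v"
  using assms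
proof (induction rule: rtrancl_induct)
  case base
  then show ?case by (rule exI[of _ "[z0]"]) (auto simp: spth_def)
next
  case (step a b)
  then obtain vs where vs: "spth E z0 vs" "last vs = a" by blast
  have ab: "{a, b} \<in> E" using step by auto
  show ?case
  proof (cases "b \<in> set vs")
    case True
    then obtain i where i: "i < length vs" "vs ! i = b" by (auto simp: in_set_conv_nth)
    let ?ws = "take (Suc i) vs"
    have "spth E z0 ?ws" using vs i unfolding spth_def
      by (auto simp: hd_take)
    moreover have "last ?ws = b" using i
      by (simp add: take_Suc_conv_app_nth)
    ultimately show ?thesis by blast
  next
    case False
    let ?ws = "vs @ [b]"
    have ne: "vs \<noteq> []" using vs by (auto simp: spth_def)
    have "\<forall>k. Suc k < length ?ws \<longrightarrow> {?ws ! k, ?ws ! Suc k} \<in> E"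
    proof (intro allI impI)
      fix k assume k: "Suc k < length ?ws"
      show "{?ws ! k, ?ws ! Suc k} \<in> E"
      proof (cases "Suc k < length vs")
        case True then show ?thesis using vs by (auto simp: spth_def nth_append)
      next
        case False
        then have "Suc k = length vs" using k by auto
        then have "k = length vs - 1" by simp
        then show ?thesis using vs ab ne by (auto simp: nth_append last_conv_nth)
      qed
    qed
    then have "spth E z0 ?ws" using vs False ne unfolding spth_def by auto
    then show ?thesis by (intro exI[of _ ?ws]) auto
  qed
qed

lemma mem_gp: "x \<in> graph_points V E \<longleftrightarrow> x \<in> V \<or> (\<exists>u v. {u,v} \<in> E \<and> x \<in> closed_segment u v)"
  unfolding graph_points_def by blast

lemma gpath_exists:
  assumes "wf_graph V E" "z0 \<in> V" "x \<in> graph_points V E"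
  shows "\<exists>vs. gpath E z0 vs x"
proof -
  have conn: "\<And>v. v \<in> V \<Longrightarrow> \<exists>vs. spth E z0 vs \<and> last vs = v"
    by (rule reach_path[OF wf_conn[OF assms(1,2)]])
  from assms(3) consider "x \<in> V" | u v where "{u,v} \<in> E" "x \<in> closed_segment u v"
    unfolding mem_gp by blast
  then show ?thesis
  proof cases
    case 1
    then obtain vs where "spth E z0 vs" "last vs = x" using conn by blast
    then have "gpath E z0 vs x" unfolding gpath_def spth_def by simp
    then show ?thesis by (rule exI)
  next
    case 2
    have "u \<in> V" by (rule edge_V(1)[OF assms(1) 2(1)])
    then obtain vs where vs: "spth E z0 vs" "last vs = u" using conn by blast
    have e: "{last vs, v} \<in> E" "x \<in> closed_segment (last vs) v" using 2 vs(2) by simp_all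
    have "gpath E z0 vs x" unfolding gpath_def using vs(1) e unfolding spth_def by blast
    then show ?thesis by (rule exI)
  qed
qed

definition cands :: "'a set \<Rightarrow> 'a list set" where
  "cands V = {ws. set ws \<subseteq> V \<and> distinct ws}"

lemma finite_cands: "wf_graph V E \<Longrightarrow> finite (cands V)"
  unfolding cands_def by (intro finite_subset_distinct wf_finite)

lemma gpath_cands: "wf_graph V E \<Longrightarrow> z0 \<in> V \<Longrightarrow> gpath E z0 ws x \<Longrightarrow> ws \<in> cands V"
proof -
  assume a: "wf_graph V E" "z0 \<in> V" "gpath E z0 ws x"
  have "distinct ws" using a(3) unfolding gpath_def by (elim conjE)
  then show ?thesis using gpath_setV[OF a] unfolding cands_def by simp
qed

lemma shortest_exists:
  assumes "wf_graph V E" "z0 \<in> V" "x \<in> graph_points V E"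
  shows "\<exists>vs. is_shortest E z0 vs x"
proof -
  define P where "P = {ws \<in> cands V. gpath E z0 ws x}"
  have "P \<subseteq> cands V" unfolding P_def by (rule Collect_subset)
  then have fin: "finite P" using finite_cands[OF assms(1)] finite_subset by metis
  obtain vs0 where vs0: "gpath E z0 vs0 x" using gpath_exists[OF assms] by (elim exE)
  have "vs0 \<in> P" unfolding P_def using vs0 gpath_cands[OF assms(1,2) vs0] by simp
  then have ne: "P \<noteq> {}" using ex_in_conv by metis
  define m where "m = arg_min_on (\<lambda>ws. gpath_len ws x) P"
  have m1: "m \<in> P" unfolding m_def by (rule arg_min_if_finite(1)[OF fin ne])
  have m2: "\<not>(\<exists>ws\<in>P. gpath_len ws x < gpath_len m x)" unfolding m_def by (rule arg_min_if_finite(2)[OF fin ne])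
  have "is_shortest E z0 m x"
    unfolding is_shortest_def
  proof (intro conjI allI impI)
    show "gpath E z0 m x" using m1 unfolding P_def by simp
    fix ws assume "gpath E z0 ws x"
    then have "ws \<in> P" unfolding P_def using gpath_cands[OF assms(1,2)] by simp
    then show "gpath_len m x \<le> gpath_len ws x" using m2 by (meson not_le)
  qed
  then show ?thesis by (rule exI)
qed

lemma spath_eq:
  assumes "unique_shortest_paths V E z0" "x \<in> graph_points V E" "is_shortest E z0 vs x"
  shows "spath E z0 x = gpath_set vs x"
  unfolding spath_def
proof (rule the_equality)
  show "\<exists>vsa. is_shortest E z0 vsa x \<and> gpath_set vs x = gpath_set vsa x" using assms(3) by blast
  fix S assume "\<exists>vsa. is_shortest E z0 vsa x \<and> S = gpath_set vsa x"
  then obtain vsa where vsa: "is_shortest E z0 vsa x" "S = gpath_set vsa x" by blast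
  have u: "\<forall>x\<in>graph_points V E. \<forall>vs ws. is_shortest E z0 vs x \<longrightarrow> is_shortest E z0 ws x \<longrightarrow>
         gpath_set vs x = gpath_set ws x" using assms(1) unfolding unique_shortest_paths_def .
  show "S = gpath_set vs x" using u assms(2,3) vsa by metis
qed



lemma le_one_plus_powr: fixes t p :: real assumes "0 \<le> t" "1 \<le> p" shows "t \<le> 1 + t powr p"
proof (cases "t \<le> 1")
  case True then show ?thesis by (simp add: add_increasing2)
next
  case False
  then have "t powr 1 \<le> t powr p" using assms by (intro powr_mono) auto
  then show ?thesis using False by simp
qed

lemma holder_set:
  fixes u :: "'a \<Rightarrow> real" and p :: real
  assumes fm: "finite_measure M" and S: "S \<in> sets M" and um: "u \<in> borel_measurable M"
    and u0: "\<And>x. 0 \<le> u x" and ui: "integrable M (\<lambda>x. u x powr p)" and p: "1 \<le> p"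
  shows "(\<integral>x. indicator S x * u x \<partial>M) powr p
           \<le> measure M S powr (p - 1) * (\<integral>x. indicator S x * u x powr p \<partial>M)"
proof -
  interpret finite_measure M by (rule fm)
  have upm: "(\<lambda>x. u x powr p) \<in> borel_measurable M" using um by measurable
  have "integrable M (\<lambda>x. 1 + u x powr p)" using ui by simp
  then have uint: "integrable M u"
    by (rule Bochner_Integration.integrable_bound) (use um u0 le_one_plus_powr[OF _ p] in \<open>auto\<close>)
  have Iint: "integrable M (\<lambda>x. indicator S x * u x)"
    using integrable_real_mult_indicator[OF S uint] by (simp add: mult.commute)
  have Aint: "integrable M (\<lambda>x. indicator S x * u x powr p)"
    using integrable_real_mult_indicator[OF S ui] by (simp add: mult.commute)
  have Sint: "integrable M (indicator S :: 'a \<Rightarrow> real)"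
    by (intro integrable_real_indicator S) (simp add: less_top[symmetric])
  define I where "I = (\<integral>x. indicator S x * u x \<partial>M)"
  define A where "A = (\<integral>x. indicator S x * u x powr p \<partial>M)"
  define m where "m = measure M S"
  have A0: "0 \<le> A" unfolding A_def by (rule Bochner_Integration.integral_nonneg) auto
  have I0: "0 \<le> I" unfolding I_def by (rule Bochner_Integration.integral_nonneg) (auto simp: u0)
  have m0: "0 \<le> m" unfolding m_def by simp
  show ?thesis
  proof (cases "m = 0 \<or> A = 0")
    case True
    have "I = 0"
    proof (cases "m = 0")
      case True
      then have "S \<in> null_sets M" using S unfolding m_def
        by (simp add: emeasure_eq_measure null_sets_def)
      then have "AE x in M. x \<notin> S" by (rule AE_not_in)
      then have "AE x in M. indicator S x * u x = 0" by eventually_elim simp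
      then show "I = 0" unfolding I_def using integral_cong_AE[of _ M "\<lambda>x. 0"] Iint
        by (simp add: integral_eq_zero_AE)
    next
      case False
      then have "A = 0" using \<open>m = 0 \<or> A = 0\<close> by simp
      then have "AE x in M. indicator S x * u x powr p = 0"
        unfolding A_def using integral_nonneg_eq_0_iff_AE[OF Aint] by simp
      then have "AE x in M. indicator S x * u x = 0" by eventually_elim (simp add: indicator_def)
      then show "I = 0" unfolding I_def by (simp add: integral_eq_zero_AE)
    qed
    then show ?thesis using A0 p by (simp flip: I_def A_def m_def)
  next
    case False
    then have mp: "0 < m" and Ap: "0 < A" using m0 A0 by auto
    show ?thesis
    proof (cases "p = 1")
      case True
      have "I = A" unfolding I_def A_def True using u0 by (simp add: powr_one)
      then have "I powr p \<le> m powr (p - 1) * A" using True mp I0 by simp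
      then show ?thesis by (simp only: I_def A_def m_def)
    next
      case False
      then have p1: "1 < p" using p by simp
      define q where "q = p / (p - 1)"
      have q1: "1 < q" using p1 unfolding q_def by simp
      have pq: "1 / p + 1 / q = 1" using p1 unfolding q_def by (simp add: field_simps)
      define b where "b = (A / m) powr ((p - 1) / p)"
      have bp: "0 < b" unfolding b_def using mp Ap by simp
      have bq: "b powr q = A / m" unfolding b_def q_def using p1 mp Ap
        by (simp add: powr_powr)
      have young: "indicator S x * u x * b \<le> indicator S x * (u x powr p / p + (A / m) / q)" for x
        using Youngs_inequality[OF p1 q1 pq u0[of x] less_imp_le[OF bp]] bq
        by (simp add: indicator_def)
      have "(\<integral>x. indicator S x * u x * b \<partial>M) \<le> (\<integral>x. indicator S x * (u x powr p / p + (A / m) / q) \<partial>M)"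
        by (rule Bochner_Integration.integral_mono) (use Iint Aint Sint young in \<open>auto simp: distrib_left\<close>)
      also have "(\<integral>x. indicator S x * (u x powr p / p + (A / m) / q) \<partial>M)
          = (\<integral>x. indicator S x * u x powr p \<partial>M) / p + (A / m) / q * (\<integral>x. indicator S x \<partial>M)"
      proof -
        have "(\<integral>x. indicator S x * (u x powr p / p + (A / m) / q) \<partial>M)
            = (\<integral>x. indicator S x * u x powr p / p + (A / m) / q * indicator S x \<partial>M)"
          by (simp add: distrib_left mult.commute)
        also have "\<dots> = (\<integral>x. indicator S x * u x powr p / p \<partial>M) + (\<integral>x. (A / m) / q * indicator S x \<partial>M)"
          by (rule Bochner_Integration.integral_add) (use Aint Sint in auto)
        finally show ?thesis by simp
      qed
      also have "\<dots> = A / p + A / q"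
        using S mp by (simp add: A_def m_def)
      also have "\<dots> = A * (1 / p + 1 / q)" by (simp add: distrib_left)
      also have "\<dots> = A" using pq by simp
      finally have "b * I \<le> A" unfolding I_def by (simp add: mult.commute)
      then have IA: "I \<le> A / b" using bp by (simp add: field_simps)
      have "I powr p \<le> (A / b) powr p" using IA I0 p by (intro powr_mono2) auto
      also have "(A / b) powr p = A * m powr (p - 1)"
      proof -
        have "b powr p = (A / m) powr (p - 1)" unfolding b_def using p1 by (simp add: powr_powr)
        also have "\<dots> = A powr (p - 1) / m powr (p - 1)" by (simp add: powr_divide)
        finally have bpw: "b powr p = A powr (p - 1) / m powr (p - 1)" .
        have "A powr p = A powr (p - 1) * A" using Ap powr_add[of A "p - 1" 1] by simp
        then show ?thesis using Ap mp by (simp add: powr_divide bpw field_simps)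
      qed
      finally show ?thesis by (simp add: I_def A_def m_def mult.commute)
    qed
  qed
qed



lemma fin_idx: "finite {i. Suc i < (n::nat)}"
  by (rule finite_subset[of _ "{..<n}"]) auto

lemma gp_closed:
  assumes wf: "wf_graph V E" shows "closed {x. gpath E z0 ws x}"
proof -
  define P where "P \<longleftrightarrow> ws \<noteq> [] \<and> hd ws = z0 \<and> distinct ws \<and>
     (\<forall>i. Suc i < length ws \<longrightarrow> {ws ! i, ws ! Suc i} \<in> E)"
  define W where "W = {w. {last ws, w} \<in> E}"
  have eq: "{x. gpath E z0 ws x} = (if P then {last ws} \<union> (\<Union>w\<in>W. closed_segment (last ws) w) else {})"
    unfolding gpath_def P_def W_def by auto
  have "W \<subseteq> V" unfolding W_def using edge_V(2)[OF wf] by blast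
  then have "finite W" using wf_finite[OF wf] finite_subset by metis
  then have "closed ({last ws} \<union> (\<Union>w\<in>W. closed_segment (last ws) w))"
    by (intro closed_Un closed_UN) auto
  then show ?thesis unfolding eq by simp
qed

lemma len_closed: "closed {x. gpath_len vs x \<le> gpath_len ws x}"
  unfolding gpath_len_def by (intro closed_Collect_le continuous_intros)

lemma gpset_closed: "closed (gpath_set vs x)"
proof -
  have eq: "\<Union>{closed_segment (vs ! i) (vs ! Suc i) | i. Suc i < length vs}
      = (\<Union>i\<in>{i. Suc i < length vs}. closed_segment (vs ! i) (vs ! Suc i))" by blast
  show ?thesis unfolding gpath_set_def eq
    by (intro closed_Un closed_UN fin_idx) auto
qed

lemma Qv_closed: "closed {z. snd z \<in> gpath_set vs (fst z)}"
proof -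
  define P where "P = \<Union>{closed_segment (vs ! i) (vs ! Suc i) | i. Suc i < length vs}"
  have cP: "closed P"
  proof -
    have eq: "P = (\<Union>i\<in>{i. Suc i < length vs}. closed_segment (vs ! i) (vs ! Suc i))"
      unfolding P_def by blast
    show ?thesis unfolding eq by (intro closed_UN fin_idx) auto
  qed
  have eq: "{z. snd z \<in> gpath_set vs (fst z)} = (UNIV \<times> P) \<union>
      {z. dist (last vs) (fst z) = dist (last vs) (snd z) + dist (snd z) (fst z)}"
    unfolding gpath_set_def P_def using between[of "last vs"] unfolding between_def
    by (auto simp: mem_Times_iff)
  show ?thesis unfolding eq
    by (intro closed_Un closed_Times cP closed_UNIV closed_Collect_eq continuous_intros)
qed

lemma Bv_borel:
  assumes wf: "wf_graph V E" and z0: "z0 \<in> V"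
  shows "{x. is_shortest E z0 vs x} \<in> sets borel"
proof -
  have eq: "{x. is_shortest E z0 vs x} = {x. gpath E z0 vs x} \<inter>
     (\<Inter>ws\<in>cands V. - {x. gpath E z0 ws x} \<union> {x. gpath_len vs x \<le> gpath_len ws x})"
    unfolding is_shortest_def using gpath_cands[OF wf z0] by blast
  have fin: "finite (cands V)" by (rule finite_cands[OF wf])
  show ?thesis unfolding eq
  proof (intro sets.Int)
    show "{x. gpath E z0 vs x} \<in> sets borel" by (intro borel_closed gp_closed[OF wf])
    show "(\<Inter>ws\<in>cands V. - {x. gpath E z0 ws x} \<union> {x. gpath_len vs x \<le> gpath_len ws x}) \<in> sets borel"
    proof (cases "cands V = {}")
      case True then show ?thesis by simp
    next
      case False
      show ?thesis
        by (rule sets.finite_INT[OF fin False])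
          (intro sets.Un borel_comp borel_closed gp_closed[OF wf] len_closed)
    qed
  qed
qed

definition Tset :: "'a::euclidean_space set \<Rightarrow> 'a set set \<Rightarrow> 'a \<Rightarrow> ('a \<times> 'a) set" where
  "Tset V E z0 = (\<Union>vs\<in>cands V. ({x. is_shortest E z0 vs x} \<times> UNIV) \<inter> {z. snd z \<in> gpath_set vs (fst z)})"

lemma T_borel:
  assumes wf: "wf_graph V E" and z0: "z0 \<in> V"
  shows "Tset V E z0 \<in> sets borel"
  unfolding Tset_def
proof (rule sets.finite_UN)
  show "finite (cands V)" by (rule finite_cands[OF wf])
  fix vs
  have "{x. is_shortest E z0 vs x} \<times> (UNIV::'a set) \<in> sets (borel \<Otimes>\<^sub>M borel)"
    using Bv_borel[OF wf z0, of vs] by (intro pair_measureI) auto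
  then have "{x. is_shortest E z0 vs x} \<times> (UNIV::'a set) \<in> sets borel"
    by (metis borel_prod)
  then show "({x. is_shortest E z0 vs x} \<times> UNIV) \<inter> {z. snd z \<in> gpath_set vs (fst z)} \<in> sets borel"
    by (rule sets.Int[OF _ borel_closed[OF Qv_closed]])
qed

lemma T_iff:
  assumes wf: "wf_graph V E" and z0: "z0 \<in> V" and u: "unique_shortest_paths V E z0"
    and x: "x \<in> graph_points V E"
  shows "(x, y) \<in> Tset V E z0 \<longleftrightarrow> y \<in> spath E z0 x"
proof
  assume "(x, y) \<in> Tset V E z0"
  then obtain vs where "is_shortest E z0 vs x" "y \<in> gpath_set vs x"
    unfolding Tset_def by auto
  then show "y \<in> spath E z0 x" using spath_eq[OF u x] by simp
next
  assume y: "y \<in> spath E z0 x"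
  obtain vs where vs: "is_shortest E z0 vs x" using shortest_exists[OF wf z0 x] by (elim exE)
  have "gpath E z0 vs x" using vs unfolding is_shortest_def by (elim conjE)
  then have c: "vs \<in> cands V" by (rule gpath_cands[OF wf z0])
  have "y \<in> gpath_set vs x" using y spath_eq[OF u x vs] by simp
  then show "(x, y) \<in> Tset V E z0" unfolding Tset_def using c vs by auto
qed

lemma spath_borel:
  assumes wf: "wf_graph V E" and z0: "z0 \<in> V" and u: "unique_shortest_paths V E z0"
    and x: "x \<in> graph_points V E"
  shows "spath E z0 x \<in> sets borel"
proof -
  obtain vs where vs: "is_shortest E z0 vs x" using shortest_exists[OF wf z0 x] by (elim exE)
  show ?thesis unfolding spath_eq[OF u x vs] by (intro borel_closed gpset_closed)
qed

lemma const_ineq: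
  fixes L p :: real assumes L: "0 \<le> L" and p: "1 \<le> p"
  shows "min 1 (rpow L (p - 1)) * (1 + L) \<le> 1 + L powr p"
proof (cases "p = 1")
  case True then show ?thesis using L by (simp add: rpow_def)
next
  case False
  then have p1: "p - 1 \<noteq> 0" by simp
  show ?thesis
  proof (cases "L \<le> 1")
    case True
    have a: "L powr (p - 1) \<le> 1" using L True p by (intro powr_le1) auto
    have b: "L powr (p - 1) * L = L powr p"
    proof (cases "L = 0")
      case False
      then show ?thesis using L powr_add[of L "p - 1" 1] by simp
    qed simp
    have "min 1 (rpow L (p - 1)) * (1 + L) \<le> L powr (p - 1) * (1 + L)"
      using L p1 by (intro mult_right_mono) (auto simp: rpow_def)
    also have "\<dots> = L powr (p - 1) + L powr p" using b by (simp add: distrib_left)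
    also have "\<dots> \<le> 1 + L powr p" using a by simp
    finally show ?thesis .
  next
    case False
    have "L powr 1 \<le> L powr p" using False p by (intro powr_mono) auto
    then have "L \<le> L powr p" using L by simp
    moreover have "min 1 (rpow L (p - 1)) * (1 + L) \<le> 1 * (1 + L)"
      using L by (intro mult_right_mono) auto
    ultimately show ?thesis by simp
  qed
qed



theorem theorem3p2:
  fixes V :: "'a::euclidean_space set" and E :: "'a set set" and z0 :: 'a
    and M :: "'a measure" and p :: real and f h :: "'a \<Rightarrow> real"
  assumes "wf_graph V E" and "z0 \<in> V" and "unique_shortest_paths V E z0"
    and "space M = graph_points V E"
    and "sets M = sets (restrict_space borel (graph_points V E))"
    and "emeasure M (graph_points V E) < \<infinity>"
    and "1 \<le> p"
    and "W1p0_deriv V E z0 M p f h"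
  shows "(min 1 (rpow (measure M (graph_points V E)) (p - 1))
            / (1 + measure M (graph_points V E) powr p)) powr (1 / p)
           * weighted_Lp_norm V E z0 M p h \<le> W1p_norm M p f h
       \<and> W1p_norm M p f h \<le>
           (max 1 (rpow (measure M (graph_points V E)) (p - 1))) powr (1 / p)
           * weighted_Lp_norm V E z0 M p h"
proof -
  note wf = assms(1) and z0 = assms(2) and u = assms(3) and spM = assms(4)
    and setsM = assms(5) and finM = assms(6) and p = assms(7)
  let ?G = "graph_points V E"
  let ?L = "measure M (graph_points V E)"
  let ?K = "max 1 (rpow ?L (p - 1))"
  let ?Lam = "\<lambda>y. Lambda_set V E z0 y"
  have fm: "finite_measure M" by (rule finite_measureI) (use finM spM in simp)
  interpret finite_measure M by (rule fm)
  interpret P: pair_sigma_finite M M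
    by (intro pair_sigma_finite.intro sigma_finite_measure_axioms)
  note Wd = assms(8)[unfolded W1p0_deriv_def]
  have hm: "h \<in> borel_measurable M" using Wd by (elim conjE)
  have hi: "integrable M (\<lambda>x. \<bar>h x\<bar> powr p)" using Wd by (elim conjE)
  have fx: "\<forall>x\<in>?G. f x - f z0 = (\<integral>y\<in>spath E z0 x. h y \<partial>M)" using Wd by (elim conjE)
  have fz: "f z0 = 0" using Wd by (elim conjE)
  define g where "g = (\<lambda>y. \<bar>h y\<bar> powr p)"
  have g0: "\<And>y. 0 \<le> g y" unfolding g_def by simp
  have gm: "g \<in> borel_measurable M" unfolding g_def using hm by measurable
  have gi: "integrable M g" unfolding g_def by (rule hi)
  have idm: "(\<lambda>x. x) \<in> borel_measurable M"
  proof -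
    have "(\<lambda>x. x) \<in> measurable (restrict_space borel ?G) borel"
      by (rule measurable_restrict_space1) simp
    then show ?thesis by (subst measurable_cong_sets[OF setsM refl])
  qed
  have setM: "A \<inter> ?G \<in> sets M" if "A \<in> sets borel" for A
    using measurable_sets[OF idm that] spM by simp
  have idN: "(\<lambda>z. z) \<in> borel_measurable (M \<Otimes>\<^sub>M M)"
  proof -
    have "(\<lambda>z. (fst z, snd z)) \<in> borel_measurable (M \<Otimes>\<^sub>M M)"
      by (intro borel_measurable_Pair measurable_compose[OF measurable_fst idm]
          measurable_compose[OF measurable_snd idm])
    then show ?thesis by simp
  qed
  define T where "T = Tset V E z0"
  have TB: "T \<in> sets borel" unfolding T_def by (rule T_borel[OF wf z0])
  have Tiff: "\<And>x y. x \<in> ?G \<Longrightarrow> (x, y) \<in> T \<longleftrightarrow> y \<in> spath E z0 x"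
    unfolding T_def by (rule T_iff[OF wf z0 u])
  define Psi where "Psi = (\<lambda>x y. indicator T (x, y) * g y :: real)"
  have Psi0: "\<And>x y. 0 \<le> Psi x y" unfolding Psi_def using g0 by simp
  have Psim: "case_prod Psi \<in> borel_measurable (M \<Otimes>\<^sub>M M)"
  proof -
    have "(\<lambda>z. indicator T z :: real) \<in> borel_measurable (M \<Otimes>\<^sub>M M)"
      using measurable_compose[OF idN borel_measurable_indicator[OF TB]] by simp
    moreover have "(\<lambda>z. g (snd z)) \<in> borel_measurable (M \<Otimes>\<^sub>M M)"
      by (rule measurable_compose[OF measurable_snd gm])
    ultimately have "(\<lambda>z. indicator T z * g (snd z) :: real) \<in> borel_measurable (M \<Otimes>\<^sub>M M)"
      by (rule borel_measurable_times)
    moreover have "case_prod Psi = (\<lambda>z. indicator T z * g (snd z))"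
      unfolding Psi_def by (simp add: fun_eq_iff split_beta)
    ultimately show ?thesis by simp
  qed
  have gsi: "integrable (M \<Otimes>\<^sub>M M) (\<lambda>z. g (snd z))"
  proof (rule P.Fubini_integrable)
    show "(\<lambda>z. g (snd z)) \<in> borel_measurable (M \<Otimes>\<^sub>M M)"
      by (rule measurable_compose[OF measurable_snd gm])
    show "integrable M (\<lambda>x. \<integral>y. norm (g (snd (x, y))) \<partial>M)" by simp
    show "AE x in M. integrable M (\<lambda>y. g (snd (x, y)))" using gi by simp
  qed
  have Psii: "integrable (M \<Otimes>\<^sub>M M) (case_prod Psi)"
  proof (rule Bochner_Integration.integrable_bound[OF gsi Psim])
    show "AE z in M \<Otimes>\<^sub>M M. norm (case_prod Psi z) \<le> norm (g (snd z))"
      by (intro AE_I2) (auto simp: Psi_def g0 indicator_def split: prod.split)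
  qed
  have F1: "integrable M (\<lambda>x. \<integral>y. Psi x y \<partial>M)" by (rule P.integrable_fst[OF Psii])
  have F2: "(\<integral>x. (\<integral>y. Psi x y \<partial>M) \<partial>M) = integral\<^sup>L (M \<Otimes>\<^sub>M M) (case_prod Psi)"
    using P.integral_fst[OF Psii] by simp
  have F3: "(\<integral>y. (\<integral>x. Psi x y \<partial>M) \<partial>M) = integral\<^sup>L (M \<Otimes>\<^sub>M M) (case_prod Psi)"
    by (rule P.integral_snd[OF Psii])
  have F4: "integrable M (\<lambda>y. \<integral>x. Psi x y \<partial>M)" by (rule P.integrable_snd[OF Psii])
  have Lam: "(\<integral>x. Psi x y \<partial>M) = g y * measure M (?Lam y)" if y: "y \<in> ?G" for y
  proof -
    have "(\<integral>x. Psi x y \<partial>M) = (\<integral>x. indicator (?Lam y) x * g y \<partial>M)"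
    proof (rule Bochner_Integration.integral_cong[OF refl])
      fix x assume "x \<in> space M"
      then have x: "x \<in> ?G" using spM by simp
      have "(x, y) \<in> T \<longleftrightarrow> x \<in> ?Lam y" using Tiff[OF x] x unfolding Lambda_set_def by simp
      then show "Psi x y = indicator (?Lam y) x * g y" unfolding Psi_def by (simp add: indicator_def)
    qed
    also have "\<dots> = measure M (?Lam y \<inter> space M) * g y" by simp
    also have "?Lam y \<inter> space M = ?Lam y" using spM unfolding Lambda_set_def by auto
    finally show ?thesis by simp
  qed
  have WLi: "integrable M (\<lambda>y. g y * measure M (?Lam y))"
    using F4 by (rule iffD1[OF Bochner_Integration.integrable_cong[OF refl], rotated]) (use Lam spM in simp)
  have WLe: "(\<integral>y. (\<integral>x. Psi x y \<partial>M) \<partial>M) = (\<integral>y. g y * measure M (?Lam y) \<partial>M)"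
    by (rule Bochner_Integration.integral_cong[OF refl]) (use Lam spM in simp)
  have L0: "0 \<le> ?L" by simp
  have K1: "1 \<le> ?K" by simp
  have pt: "\<bar>f x\<bar> powr p \<le> ?K * (\<integral>y. Psi x y \<partial>M)" if x: "x \<in> ?G" for x
  proof -
    define S where "S = spath E z0 x \<inter> ?G"
    have S: "S \<in> sets M" unfolding S_def by (rule setM[OF spath_borel[OF wf z0 u x]])
    have "f x = (\<integral>y\<in>spath E z0 x. h y \<partial>M)" using fx x fz by simp
    also have "\<dots> = (\<integral>y. indicator S y * h y \<partial>M)"
      unfolding set_lebesgue_integral_def
      by (rule Bochner_Integration.integral_cong[OF refl]) (use spM in \<open>simp add: S_def indicator_def\<close>)
    finally have fxe: "f x = (\<integral>y. indicator S y * h y \<partial>M)" .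
    have "\<bar>f x\<bar> \<le> (\<integral>y. \<bar>indicator S y * h y\<bar> \<partial>M)" unfolding fxe by (rule integral_abs_bound)
    also have "\<dots> = (\<integral>y. indicator S y * \<bar>h y\<bar> \<partial>M)" by (simp add: abs_mult)
    finally have fa: "\<bar>f x\<bar> \<le> (\<integral>y. indicator S y * \<bar>h y\<bar> \<partial>M)" .
    have "\<bar>f x\<bar> powr p \<le> (\<integral>y. indicator S y * \<bar>h y\<bar> \<partial>M) powr p"
      using fa p by (intro powr_mono2) auto
    also have "\<dots> \<le> measure M S powr (p - 1) * (\<integral>y. indicator S y * \<bar>h y\<bar> powr p \<partial>M)"
      by (rule holder_set[OF fm S _ _ hi p]) (use hm in auto)
    also have "(\<integral>y. indicator S y * \<bar>h y\<bar> powr p \<partial>M) = (\<integral>y. Psi x y \<partial>M)"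
    proof (rule Bochner_Integration.integral_cong[OF refl])
      fix y assume "y \<in> space M"
      then have y: "y \<in> ?G" using spM by simp
      show "indicator S y * \<bar>h y\<bar> powr p = Psi x y"
        unfolding Psi_def g_def S_def using Tiff[OF x, of y] y by (simp add: indicator_def)
    qed
    also have "measure M S powr (p - 1) * (\<integral>y. Psi x y \<partial>M) \<le> ?K * (\<integral>y. Psi x y \<partial>M)"
    proof (rule mult_right_mono)
      show "0 \<le> (\<integral>y. Psi x y \<partial>M)" by (rule Bochner_Integration.integral_nonneg) (simp add: Psi0)
      show "measure M S powr (p - 1) \<le> ?K"
      proof (cases "p = 1")
        case True then show ?thesis by (simp add: rpow_def)
      next
        case False
        have "measure M S \<le> ?L" using bounded_measure[of S] spM by simp
        then have "measure M S powr (p - 1) \<le> ?L powr (p - 1)" using p by (intro powr_mono2) auto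
        then show ?thesis using False by (simp add: rpow_def)
      qed
    qed
    finally show ?thesis .
  qed
  define Fp where "Fp = (\<integral>x. \<bar>f x\<bar> powr p \<partial>M)"
  define Bh where "Bh = (\<integral>x. g x \<partial>M)"
  define Wl where "Wl = (\<integral>y. g y * measure M (?Lam y) \<partial>M)"
  define W where "W = (\<integral>x. what V E z0 M x * \<bar>h x\<bar> powr p \<partial>M)"
  have Fp0: "0 \<le> Fp" unfolding Fp_def by (rule Bochner_Integration.integral_nonneg) simp
  have Bh0: "0 \<le> Bh" unfolding Bh_def by (rule Bochner_Integration.integral_nonneg) (simp add: g0)
  have FpK: "Fp \<le> ?K * Wl"
  proof -
    have "Fp \<le> (\<integral>x. ?K * (\<integral>y. Psi x y \<partial>M) \<partial>M)" unfolding Fp_def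
    proof (rule integral_mono')
      show "integrable M (\<lambda>x. ?K * (\<integral>y. Psi x y \<partial>M))" using F1 by simp
      show "\<And>x. x \<in> space M \<Longrightarrow> \<bar>f x\<bar> powr p \<le> ?K * (\<integral>y. Psi x y \<partial>M)" using pt spM by simp
      show "\<And>x. x \<in> space M \<Longrightarrow> 0 \<le> ?K * (\<integral>y. Psi x y \<partial>M)"
        using K1 by (intro mult_nonneg_nonneg Bochner_Integration.integral_nonneg) (auto simp: Psi0)
    qed
    also have "\<dots> = ?K * Wl" using F2 F3 WLe unfolding Wl_def by simp
    finally show ?thesis .
  qed
  have WBW: "W = Bh + Wl"
  proof -
    have "W = (\<integral>x. g x + g x * measure M (?Lam x) \<partial>M)"
      unfolding W_def what_def g_def by (simp add: algebra_simps)
    also have "\<dots> = Bh + Wl" unfolding Bh_def Wl_def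
      by (rule Bochner_Integration.integral_add[OF gi WLi])
    finally show ?thesis .
  qed
  have WlL: "Wl \<le> ?L * Bh"
  proof -
    have "Wl \<le> (\<integral>y. g y * ?L \<partial>M)" unfolding Wl_def
    proof (rule Bochner_Integration.integral_mono[OF WLi])
      show "integrable M (\<lambda>y. g y * ?L)" using gi by simp
      fix y assume "y \<in> space M"
      show "g y * measure M (?Lam y) \<le> g y * ?L"
        using bounded_measure[of "?Lam y"] spM g0[of y] by (intro mult_left_mono) auto
    qed
    also have "\<dots> = ?L * Bh" unfolding Bh_def by simp
    finally show ?thesis .
  qed
  have W0: "0 \<le> W" unfolding W_def
    by (rule Bochner_Integration.integral_nonneg) (simp add: what_def add_nonneg_nonneg)
  have Wn: "W1p_norm M p f h = (Fp + Bh) powr (1 / p)"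
    unfolding W1p_norm_def Fp_def Bh_def g_def ..
  have Ww: "weighted_Lp_norm V E z0 M p h = W powr (1 / p)"
    unfolding weighted_Lp_norm_def W_def ..
  define c where "c = min 1 (rpow ?L (p - 1)) / (1 + ?L powr p)"
  have c0: "0 \<le> c" unfolding c_def by (simp add: rpow_def)
  have c1: "c * (1 + ?L) \<le> 1"
  proof -
    have "0 < 1 + ?L powr p" by (simp add: add_pos_nonneg)
    then show ?thesis unfolding c_def using const_ineq[OF L0 p] by (simp add: field_simps)
  qed
  have up: "Fp + Bh \<le> ?K * W"
  proof -
    have "1 * Bh \<le> ?K * Bh" by (rule mult_right_mono[OF K1 Bh0])
    then have "Fp + Bh \<le> ?K * Wl + ?K * Bh" using FpK by simp
    then show ?thesis using WBW by (simp add: distrib_left add.commute)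
  qed
  have lo: "c * W \<le> Fp + Bh"
  proof -
    have "W \<le> (1 + ?L) * Bh" using WBW WlL by (simp add: algebra_simps)
    then have "c * W \<le> c * ((1 + ?L) * Bh)" using c0 by (rule mult_left_mono)
    also have "\<dots> = (c * (1 + ?L)) * Bh" by simp
    also have "\<dots> \<le> 1 * Bh" using c1 Bh0 by (rule mult_right_mono)
    finally show ?thesis using Fp0 by simp
  qed
  have "c powr (1 / p) * W powr (1 / p) \<le> (Fp + Bh) powr (1 / p)"
    unfolding powr_mult[symmetric] using lo c0 W0 p by (intro powr_mono2) auto
  moreover have "(Fp + Bh) powr (1 / p) \<le> ?K powr (1 / p) * W powr (1 / p)"
    unfolding powr_mult[symmetric] using up Fp0 Bh0 p by (intro powr_mono2) auto
  ultimately show ?thesis unfolding Wn Ww c_def by simp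
qed

end
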